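(* Assume (a1)–(a3) with constants $L,\beta$, let $l\in\mathbb{R}$ be such that $F+\frac l2\|\cdot\|^2$ is convex, and let $\gamma>0$ satisfy $\Lambda(\gamma)>0$. Suppose $F$, $G$ and $H$ are each bounded below and at least one of them is coercive (i.e. $\liminf_{\|x\|\to\infty}f(x)=\infty$). Then every sequence $\{(x^t,y^t,z^t)\}$ generated by the DYS iteration is bounded.
   Context: Assumptions: (a1) $F:\mathbb{R}^n\to\mathbb{R}$ is differentiable with $L$-Lipschitz gradient; (a2) $G:\mathbb{R}^n\to(-\infty,\infty]$ is proper, lower semicontinuous, and $\arg\min_y\{G(y)+\frac1{2\gamma}\|y-x\|^2\}\neq\emptyset$ for all $x$ and $\gamma>0$; (a3) $H:\mathbb{R}^n\to\mathbb{R}$ is differentiable with $\beta$-Lipschitz gradient. DYS iteration: fix $\gamma>0$, $x^0$; for $t\ge0$, $y^{t+1}\in\arg\min_y\{F(y)+\frac{1}{2\gamma}\|y-x^t\|^2\}$, $z^{t+1}\in\arg\min_z\{G(z)+\frac{1}{2\gamma}\|z-(2y^{t+1}-\gamma\nabla H(y^{t+1})-x^t)\|^2\}$, $x^{t+1}=x^t+(z^{t+1}-y^{t+1})$. $\Lambda(\gamma)=\tfrac12(\tfrac1\gamma-l)-\beta-(\tfrac1\gamma+\tfrac\beta2)[(-1+2\gamma l)+(1+\gamma L)^2]$. *)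

theory Defs
  imports "HOL-Analysis.Analysis"
begin

definition lsc :: "('a::topological_space \<Rightarrow> ereal) \<Rightarrow> bool" where
  "lsc f \<longleftrightarrow> (\<forall>x. f x \<le> Liminf (at x) f)"

definition proper_fun :: "('a \<Rightarrow> ereal) \<Rightarrow> bool" where
  "proper_fun f \<longleftrightarrow> (\<forall>x. f x \<noteq> -\<infinity>) \<and> (\<exists>x. f x \<noteq> \<infinity>)"

definition argmin_set :: "('a \<Rightarrow> 'b::linorder) \<Rightarrow> 'a set" where
  "argmin_set f = {y. \<forall>z. f y \<le> f z}"

definition Lambda :: "real \<Rightarrow> real \<Rightarrow> real \<Rightarrow> real \<Rightarrow> real" where
  "Lambda L l \<beta> \<gamma> =
     (1/2) * (1/\<gamma> - l) - \<beta> - (1/\<gamma> + \<beta>/2) * ((-1 + 2*\<gamma>*l) + (1 + \<gamma>*L)^2)"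

end

theory Submission
  imports Defs
begin


lemma path_deriv:
  fixes H :: "'a::real_inner \<Rightarrow> real"
  assumes "\<And>u. GDERIV H u :> h u"
  shows "((\<lambda>t. H (a + t *\<^sub>R d)) has_real_derivative inner d (h (a + t *\<^sub>R d))) (at t)"
proof -
  have 1: "((\<lambda>t. a + t *\<^sub>R d) has_derivative (\<lambda>s. s *\<^sub>R d)) (at t)"
    by (auto intro!: derivative_eq_intros)
  have "((\<lambda>t. H (a + t *\<^sub>R d)) has_derivative (\<lambda>s. inner (s *\<^sub>R d) (h (a + t *\<^sub>R d)))) (at t)"
    using has_derivative_compose[OF 1 assms[unfolded gderiv_def]] by (simp add: o_def)
  moreover have "(\<lambda>s. inner (s *\<^sub>R d) (h (a + t *\<^sub>R d))) = (*) (inner d (h (a + t *\<^sub>R d)))"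
    by (auto simp: fun_eq_iff)
  ultimately show ?thesis by (simp add: has_field_derivative_def)
qed

lemma descent:
  fixes H :: "'a::real_inner \<Rightarrow> real"
  assumes g: "\<And>u. GDERIV H u :> h u" and lip: "K-lipschitz_on UNIV h"
  shows "H b \<le> H a + inner (h a) (b - a) + K/2 * (norm (b - a))^2"
proof -
  define d where "d = b - a"
  define \<psi> where "\<psi> t = H (a + t *\<^sub>R d) - t * inner (h a) d - K * t^2 / 2 * (norm d)^2" for t
  have D: "(\<psi> has_real_derivative (inner d (h (a + t *\<^sub>R d)) - inner (h a) d - K * t * (norm d)^2)) (at t)" for t
    unfolding \<psi>_def
    by (rule derivative_eq_intros path_deriv[OF g] | simp)+
  obtain s where s: "0 < s" "s < 1" "\<psi> 1 - \<psi> 0 = (1 - 0) * (inner d (h (a + s *\<^sub>R d)) - inner (h a) d - K * s * (norm d)^2)"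
    using MVT2[of 0 1 \<psi>, OF _ D] by auto
  have "inner d (h (a + s *\<^sub>R d)) - inner (h a) d = inner d (h (a + s *\<^sub>R d) - h a)"
    by (simp add: inner_diff_right inner_commute)
  also have "\<dots> \<le> norm d * norm (h (a + s *\<^sub>R d) - h a)" by (rule norm_cauchy_schwarz)
  also have "norm (h (a + s *\<^sub>R d) - h a) \<le> K * norm (s *\<^sub>R d)"
    using lipschitz_onD[OF lip, of "a + s *\<^sub>R d" a] by (simp add: dist_norm)
  hence "norm d * norm (h (a + s *\<^sub>R d) - h a) \<le> norm d * (K * norm (s *\<^sub>R d))"
    by (simp add: mult_left_mono)
  also have "\<dots> = K * s * (norm d)^2" using s by (simp add: power2_eq_square)
  finally have "\<psi> 1 - \<psi> 0 \<le> 0" using s by simp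
  thus ?thesis unfolding \<psi>_def d_def by (simp add: inner_commute)
qed

lemma norm_path: "(norm (a + t *\<^sub>R d))^2 = (norm a)^2 + 2 * t * inner a d + t^2 * (norm d)^2"
  for a d :: "'a::real_inner"
  unfolding power2_norm_eq_inner by (simp add: inner_add_left inner_add_right inner_commute power2_eq_square algebra_simps)

lemma tangent:
  fixes F :: "'a::real_inner \<Rightarrow> real"
  assumes g: "\<And>u. GDERIV F u :> gF u"
    and cvx: "convex_on UNIV (\<lambda>u. F u + l/2 * (norm u)^2)"
  shows "F b \<ge> F a + inner (gF a) (b - a) - l/2 * (norm (b - a))^2"
proof -
  define d where "d = b - a"
  define \<psi> where "\<psi> t = F (a + t *\<^sub>R d) + l/2 * ((norm a)^2 + 2 * t * inner a d + t^2 * (norm d)^2)" for t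
  have \<psi>eq: "\<psi> t = F (a + t *\<^sub>R d) + l/2 * (norm (a + t *\<^sub>R d))^2" for t
    unfolding \<psi>_def norm_path ..
  have cv: "convex_on UNIV \<psi>"
  proof (rule convex_onI)
    fix s x y :: real assume s: "0 < s" "s < 1"
    have e: "a + ((1 - s) * x + s * y) *\<^sub>R d = (1 - s) *\<^sub>R (a + x *\<^sub>R d) + s *\<^sub>R (a + y *\<^sub>R d)"
      by (simp add: algebra_simps)
    show "\<psi> ((1 - s) *\<^sub>R x + s *\<^sub>R y) \<le> (1 - s) * \<psi> x + s * \<psi> y"
      unfolding \<psi>eq using convex_onD[OF cvx, of s "a + x *\<^sub>R d" "a + y *\<^sub>R d"] s
      by (simp add: e)
  qed simp
  have D: "(\<psi> has_real_derivative (inner d (gF (a + t *\<^sub>R d)) + l/2 * (2 * inner a d + 2 * t * (norm d)^2))) (at t)" for t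
    unfolding \<psi>_def
    by (auto intro!: derivative_eq_intros path_deriv[OF g] simp: algebra_simps)
  have "\<psi> 1 - \<psi> 0 \<ge> (inner d (gF a) + l/2 * (2 * inner a d)) * (1 - 0)"
    using convex_on_imp_above_tangent[OF cv, of 0 1] D[of 0] by simp
  thus ?thesis unfolding \<psi>_def d_def
    by (simp add: inner_commute algebra_simps)
qed

lemma fermat:
  fixes F :: "'a::euclidean_space \<Rightarrow> real"
  assumes g: "\<And>u. GDERIV F u :> gF u" and c: "c > 0"
    and y: "y \<in> argmin_set (\<lambda>v. F v + 1/(2*c) * (norm (v - x))^2)"
  shows "x = y + c *\<^sub>R gF y"
proof -
  have D: "((\<lambda>v. F v + 1/(2*c) * inner (v - x) (v - x)) has_derivative
      (\<lambda>h. inner h (gF y) + 1/(2*c) * (inner h (y - x) + inner (y - x) h))) (at y)"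
    using g[of y] c unfolding gderiv_def
    by (auto intro!: derivative_eq_intros simp: fun_eq_iff field_simps)
  have m: "\<forall>v\<in>UNIV. (\<lambda>v. F v + 1/(2*c) * inner (v - x) (v - x)) y \<le> (\<lambda>v. F v + 1/(2*c) * inner (v - x) (v - x)) v"
    using y unfolding argmin_set_def power2_norm_eq_inner by auto
  have z: "(\<lambda>h. inner h (gF y) + 1/(2*c) * (inner h (y - x) + inner (y - x) h)) = (\<lambda>h. 0)"
    by (rule differential_zero_maxmin[of y UNIV, OF _ _ D]) (use m in auto)
  define w where "w = gF y + (1/c) *\<^sub>R (y - x)"
  have "inner w w = 0"
    using fun_cong[OF z, of w] unfolding w_def
    by (simp add: inner_add_left inner_add_right inner_commute algebra_simps)
  hence "w = 0" by simp
  hence "c *\<^sub>R w = 0" by simp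
  thus ?thesis using c unfolding w_def by (simp add: algebra_simps)
qed

lemma lam_a:
  fixes L l \<beta> \<gamma> :: real
  assumes g: "\<gamma> > 0" and L: "L \<ge> 0" and b: "\<beta> \<ge> 0" and ll: "l \<ge> -L"
    and lam: "Lambda L l \<beta> \<gamma> > 0"
  shows "1/(2*\<gamma>) - (l+\<beta>)/2 - \<gamma>*L^2 - \<gamma>*\<beta>*L \<ge> 0"
proof -
  define P where "P = \<beta>*\<gamma>*(l+L)"
  define Q where "Q = \<beta>/2*(1-\<gamma>*L)^2"
  define R where "R = \<gamma>*L^2 + \<gamma>*\<beta>*L"
  have e: "1/(2*\<gamma>) - (l+\<beta>)/2 - R - Lambda L l \<beta> \<gamma>
       = 2*(l+L) + P + Q"
    unfolding Lambda_def P_def Q_def R_def using g by (simp add: field_simps power2_eq_square)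
  have "P \<ge> 0" unfolding P_def using g b ll by simp
  moreover have "Q \<ge> 0" unfolding Q_def using b by simp
  ultimately have "1/(2*\<gamma>) - (l+\<beta>)/2 - R \<ge> 0" using e lam ll by (smt (verit))
  thus ?thesis unfolding R_def by simp
qed

lemma lam_b:
  fixes L l \<beta> \<gamma> :: real
  assumes g: "\<gamma> > 0" and L: "L \<ge> 0" and b: "\<beta> \<ge> 0" and ll: "l \<ge> -L"
    and lam: "Lambda L l \<beta> \<gamma> > 0"
  shows "\<gamma>*(L+\<beta>) < 1"
proof (rule ccontr)
  assume "\<not> \<gamma>*(L+\<beta>) < 1"
  hence ub: "\<gamma>*L + \<gamma>*\<beta> \<ge> 1" by (simp add: algebra_simps)
  define u where "u = \<gamma>*L"
  define v where "v = \<gamma>*\<beta>"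
  define m where "m = \<gamma>*l"
  have u0: "u \<ge> 0" and v0: "v \<ge> 0" and mu: "m \<ge> -u" and uv: "u + v \<ge> 1"
    using g L b ll ub unfolding u_def v_def m_def by (auto simp: mult_left_mono[of "-L" l \<gamma>, simplified])
  have e: "\<gamma> * Lambda L l \<beta> \<gamma> = 1/2 - m/2 - v - (1 + v/2)*(2*u + u^2 + 2*m)"
    unfolding Lambda_def u_def v_def m_def using g by (simp add: field_simps power2_eq_square)
  have "(1 + v/2)*(2*m) \<ge> (1 + v/2)*(-2*u)" using mu v0 by (intro mult_left_mono) auto
  hence f: "\<gamma> * Lambda L l \<beta> \<gamma> \<le> 1/2 + u/2 - v - (1 + v/2)*u^2"
    unfolding e using mu by (simp add: algebra_simps)
  have "1/2 + u/2 - v - (1 + v/2)*u^2 \<le> 0"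
  proof (cases "u \<ge> 1")
    case True
    have "(1 - u)*(1 + 2*u) \<le> 0" using True by (intro mult_nonpos_nonneg) auto
    moreover have "v/2*u^2 \<ge> 0" using v0 by simp
    ultimately show ?thesis using v0 by (simp add: algebra_simps power2_eq_square)
  next
    case False
    have "(v - (1-u))*(1 + u^2/2) \<ge> 0" using uv by simp
    moreover have "(1-u)^3 \<ge> 0" using False by simp
    moreover have "1/2 + u/2 - v - (1 + v/2)*u^2 = -(v - (1-u))*(1 + u^2/2) - (1-u)^3/2"
      by (simp add: field_simps power2_eq_square power3_eq_cube)
    ultimately show ?thesis by linarith
  qed
  hence "\<gamma> * Lambda L l \<beta> \<gamma> \<le> 0" using f by linarith
  moreover have "\<gamma> * Lambda L l \<beta> \<gamma> > 0" using g lam by simp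
  ultimately show False by linarith
qed

lemma l_ge:
  fixes F :: "'a::euclidean_space \<Rightarrow> real"
  assumes g: "\<And>u. GDERIV F u :> gF u"
    and cvx: "convex_on UNIV (\<lambda>u. F u + l/2 * (norm u)^2)"
    and lip: "L-lipschitz_on UNIV gF"
  shows "l \<ge> -L"
proof -
  obtain e :: 'a where e: "e \<in> Basis" using nonempty_Basis by blast
  hence e0: "e \<noteq> 0" by auto
  have t1: "F e \<ge> F 0 + inner (gF 0) (e - 0) - l/2 * (norm (e - 0))^2" by (rule tangent[OF g cvx])
  have t2: "F 0 \<ge> F e + inner (gF e) (0 - e) - l/2 * (norm (0 - e))^2" by (rule tangent[OF g cvx])
  have "inner (gF e - gF 0) e \<ge> -l * (norm e)^2"
    using t1 t2 by (simp add: inner_diff_left inner_diff_right)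
  moreover have "inner (gF e - gF 0) e \<le> norm (gF e - gF 0) * norm e" by (rule norm_cauchy_schwarz)
  moreover have "norm (gF e - gF 0) \<le> L * norm e"
    using lipschitz_onD[OF lip, of e 0] by (simp add: dist_norm)
  ultimately have "-l * (norm e)^2 \<le> L * (norm e)^2"
    by (smt (verit) mult_right_mono norm_ge_zero power2_eq_square mult.assoc)
  hence "(L + l) * (norm e)^2 \<ge> 0" by (simp add: algebra_simps)
  moreover have "(norm e)^2 > 0" using e0 by simp
  ultimately have "L + l \<ge> 0" by (simp add: zero_le_mult_iff)
  thus ?thesis by simp
qed



lemma sqexp: "(norm (a + b))^2 = (norm a)^2 + 2 * inner a b + (norm b)^2" for a b :: "'a::real_inner"
  unfolding power2_norm_eq_inner by (simp add: inner_add_left inner_add_right inner_commute)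

lemma stepA:
  fixes y2 z1 z2 p :: "'a::real_inner" and G1 G2 c :: real
  assumes c: "c > 0"
   and zopt: "G2 + 1/(2*c) * (norm (z2 - (y2 - c *\<^sub>R p)))^2 \<le> G1 + 1/(2*c) * (norm (z1 - (y2 - c *\<^sub>R p)))^2"
  shows "G2 + inner p (z2 - y2) + 1/(2*c) * (norm (z2 - y2))^2 \<le> G1 + inner p (z1 - y2) + 1/(2*c) * (norm (z1 - y2))^2"
proof -
  have e: "1/(2*c) * (norm (w - (y2 - c *\<^sub>R p)))^2 = 1/(2*c) * (norm (w - y2))^2 + inner p (w - y2) + c/2 * (norm p)^2" for w
  proof -
    have ww: "w - (y2 - c *\<^sub>R p) = (w - y2) + c *\<^sub>R p" by simp
    have "(norm (w - (y2 - c *\<^sub>R p)))^2 = (norm (w - y2))^2 + 2 * c * inner (w - y2) p + c^2 * (norm p)^2"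
      unfolding ww sqexp by (simp add: power_mult_distrib)
    thus ?thesis using c by (simp add: field_simps inner_commute power2_eq_square)
  qed
  show ?thesis using zopt unfolding e by simp
qed

lemma identI:
  fixes y1 d g1 h1 dl et :: "'a::real_inner" and c :: real
  assumes c: "c > 0"
  shows "(inner ((g1 + dl) + (h1 + et)) (c *\<^sub>R dl) + 1/(2*c) * (norm (c *\<^sub>R dl))^2)
        - (inner (g1 + h1) (d + c *\<^sub>R dl) + 1/(2*c) * (norm (d + c *\<^sub>R dl))^2)
       = - inner (g1 + dl) d - inner h1 d + c * (norm dl)^2 + c * inner et dl - 1/(2*c) * (norm d)^2"
proof -
  have n1: "(norm (d + c *\<^sub>R dl))^2 = (norm d)^2 + 2*c*inner d dl + c^2*(norm dl)^2"
    using sqexp[of d "c *\<^sub>R dl"] by (simp add: power_mult_distrib)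
  have n2: "(norm (c *\<^sub>R dl))^2 = c^2*(norm dl)^2" by (simp add: power_mult_distrib)
  have n3: "inner dl dl = norm dl * norm dl" by (metis power2_eq_square power2_norm_eq_inner)
  show ?thesis unfolding n1 n2
  using c n3 by (simp add: inner_add_left inner_add_right inner_commute power2_eq_square field_simps)
qed

lemma keydesc:
  fixes y1 y2 z1 z2 :: "'a::real_inner" and g h :: "'a \<Rightarrow> 'a" and F H :: "'a \<Rightarrow> real"
  assumes c: "c > 0"
   and hz: "z1 = y2 + c *\<^sub>R (g y2 - g y1)"
   and zopt: "G2 + 1/(2*c) * (norm (z2 - (y2 - c *\<^sub>R (g y2 + h y2))))^2 \<le> G1 + 1/(2*c) * (norm (z1 - (y2 - c *\<^sub>R (g y2 + h y2))))^2"
   and tF: "F y1 \<ge> F y2 + inner (g y2) (y1 - y2) - l/2 * (norm (y1 - y2))^2"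
   and dH: "H y2 \<le> H y1 + inner (h y1) (y2 - y1) + \<beta>/2 * (norm (y2 - y1))^2"
   and Lg: "norm (g y2 - g y1) \<le> L * norm (y2 - y1)"
   and Lh: "norm (h y2 - h y1) \<le> \<beta> * norm (y2 - y1)"
   and L0: "L \<ge> 0" and b0: "\<beta> \<ge> 0"
   and N: "1/(2*c) - (l+\<beta>)/2 - c*L^2 - c*\<beta>*L \<ge> 0"
  shows "F y2 + H y2 + G2 + inner (g y2 + h y2) (z2 - y2) + 1/(2*c) * (norm (z2 - y2))^2
      \<le> F y1 + H y1 + G1 + inner (g y1 + h y1) (z1 - y1) + 1/(2*c) * (norm (z1 - y1))^2"
proof -
  define d where "d = y2 - y1"
  define dl where "dl = g y2 - g y1"
  define et where "et = h y2 - h y1"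
  have A: "G2 + inner (g y2 + h y2) (z2 - y2) + 1/(2*c) * (norm (z2 - y2))^2
      \<le> G1 + inner (g y2 + h y2) (z1 - y2) + 1/(2*c) * (norm (z1 - y2))^2"
    by (rule stepA[OF c zopt])
  have z12: "z1 - y2 = c *\<^sub>R dl" unfolding hz dl_def by simp
  have z11: "z1 - y1 = d + c *\<^sub>R dl" unfolding hz dl_def d_def by simp
  have g2: "g y2 = g y1 + dl" and h2: "h y2 = h y1 + et" unfolding dl_def et_def by simp_all
  have I: "(inner (g y2 + h y2) (z1 - y2) + 1/(2*c) * (norm (z1 - y2))^2)
        - (inner (g y1 + h y1) (z1 - y1) + 1/(2*c) * (norm (z1 - y1))^2)
       = - inner (g y2) d - inner (h y1) d + c * (norm dl)^2 + c * inner et dl - 1/(2*c) * (norm d)^2"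
    unfolding z12 z11 g2 h2 by (rule identI[OF c])
  have tF': "F y2 - F y1 \<le> inner (g y2) d + l/2 * (norm d)^2"
  proof -
    have "y1 - y2 = - d" unfolding d_def by simp
    hence "inner (g y2) (y1 - y2) = - inner (g y2) d" and "norm (y1 - y2) = norm d" by auto
    thus ?thesis using tF by simp
  qed
  have dH': "H y2 - H y1 \<le> inner (h y1) d + \<beta>/2 * (norm d)^2" using dH unfolding d_def by simp
  have nd: "norm dl \<le> L * norm d" using Lg unfolding dl_def d_def .
  have ne: "norm et \<le> \<beta> * norm d" using Lh unfolding et_def d_def .
  have q1: "(norm dl)^2 \<le> L^2 * (norm d)^2"
    using power_mono[OF nd, of 2] by (simp add: power_mult_distrib)
  have "inner et dl \<le> norm et * norm dl" by (rule norm_cauchy_schwarz)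
  also have "\<dots> \<le> (\<beta> * norm d) * (L * norm d)"
    using ne nd b0 by (intro mult_mono) auto
  finally have q2: "inner et dl \<le> \<beta> * L * (norm d)^2" by (simp add: power2_eq_square algebra_simps)
  have q1': "c * (norm dl)^2 \<le> c * (L^2 * (norm d)^2)" using q1 c by simp
  have q2': "c * inner et dl \<le> c * (\<beta> * L * (norm d)^2)" using q2 c by simp
  have Nd: "(1/(2*c) - (l+\<beta>)/2 - c*L^2 - c*\<beta>*L) * (norm d)^2 \<ge> 0" using N by simp
  define T1 where "T1 = c * (L^2 * (norm d)^2)"
  define T2 where "T2 = c * (\<beta> * L * (norm d)^2)"
  define T3 where "T3 = 1/(2*c) * (norm d)^2"
  define T4 where "T4 = (l+\<beta>)/2 * (norm d)^2"
  define E where "E = (1/(2*c) - (l+\<beta>)/2 - c*L^2 - c*\<beta>*L) * (norm d)^2"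
  have EE: "T4 + T1 + T2 - T3 = - E"
    unfolding T1_def T2_def T3_def T4_def E_def by (simp add: algebra_simps)
  have e4: "l/2 * (norm d)^2 + \<beta>/2 * (norm d)^2 = T4" unfolding T4_def by (simp add: algebra_simps)
  show ?thesis using A I tF' dH' q1' q2' Nd EE e4
    unfolding T1_def[symmetric] T2_def[symmetric] T3_def[symmetric] E_def[symmetric] by linarith
qed


lemma bounded_range_Suc:
  fixes f :: "nat \<Rightarrow> 'a::real_normed_vector"
  assumes "\<And>t. norm (f (Suc t)) \<le> B"
  shows "bounded (range f)"
  unfolding bounded_iff
proof (intro exI ballI)
  fix v assume "v \<in> range f"
  then obtain t where v: "v = f t" by auto
  show "norm v \<le> max B (norm (f 0))"
    using assms[of "t - 1"] unfolding v by (cases t) auto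
qed

lemma sq_le_bound: "(r::real) \<ge> 0 \<Longrightarrow> r^2 \<le> C \<Longrightarrow> r \<le> max 1 C"
  by (cases "r \<le> 1") (auto simp: power2_eq_square intro: order_trans[of r "r*r"])

theorem mainTheorem3:
  fixes F H :: "'a::euclidean_space \<Rightarrow> real"
    and gradF gradH :: "'a \<Rightarrow> 'a"
    and G :: "'a \<Rightarrow> ereal"
    and L \<beta> l \<gamma> :: real
    and x y z :: "nat \<Rightarrow> 'a"
  assumes a1_grad: "\<And>u. GDERIV F u :> gradF u"
    and a1_lip: "L-lipschitz_on UNIV gradF"
    and a2_proper: "proper_fun G"
    and a2_lsc: "lsc G"
    and a2_prox: "\<And>u c. c > 0 \<Longrightarrow>
        argmin_set (\<lambda>v. G v + ereal (1/(2*c) * (norm (v - u))^2)) \<noteq> {}"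
    and a3_grad: "\<And>u. GDERIV H u :> gradH u"
    and a3_lip: "\<beta>-lipschitz_on UNIV gradH"
    and weak_cvx: "convex_on UNIV (\<lambda>u. F u + l/2 * (norm u)^2)"
    and gamma_pos: "\<gamma> > 0"
    and Lambda_pos: "Lambda L l \<beta> \<gamma> > 0"
    and F_bdd: "\<exists>c. \<forall>u. c \<le> F u"
    and G_bdd: "\<exists>c::real. \<forall>u. ereal c \<le> G u"
    and H_bdd: "\<exists>c. \<forall>u. c \<le> H u"
    and coercive: "filterlim F at_top at_infinity \<or> (G \<longlongrightarrow> \<infinity>) at_infinity
                   \<or> filterlim H at_top at_infinity"
    and y_step: "\<And>t. y (Suc t) \<in> argmin_set (\<lambda>v. F v + 1/(2*\<gamma>) * (norm (v - x t))^2)"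
    and z_step: "\<And>t. z (Suc t) \<in> argmin_set (\<lambda>w. G w + ereal (1/(2*\<gamma>) *
                   (norm (w - (2 *\<^sub>R y (Suc t) - \<gamma> *\<^sub>R gradH (y (Suc t)) - x t)))^2))"
    and x_step: "\<And>t. x (Suc t) = x t + (z (Suc t) - y (Suc t))"
  shows "bounded (range x) \<and> bounded (range y) \<and> bounded (range z)"
proof -
  let ?g = gradF and ?h = gradH
  define k where "k = 1/(2*\<gamma>)"
  have L0: "L \<ge> 0" using lipschitz_on_nonneg[OF a1_lip] .
  have b0: "\<beta> \<ge> 0" using lipschitz_on_nonneg[OF a3_lip] .
  have ll: "l \<ge> -L" by (rule l_ge[OF a1_grad weak_cvx a1_lip])
  have N: "1/(2*\<gamma>) - (l+\<beta>)/2 - \<gamma>*L^2 - \<gamma>*\<beta>*L \<ge> 0"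
    by (rule lam_a[OF gamma_pos L0 b0 ll Lambda_pos])
  have Lb: "\<gamma>*(L+\<beta>) < 1" by (rule lam_b[OF gamma_pos L0 b0 ll Lambda_pos])
  have X: "x t = y (Suc t) + \<gamma> *\<^sub>R ?g (y (Suc t))" for t
    by (rule fermat[OF a1_grad gamma_pos y_step])
  obtain w0 where w0: "G w0 \<noteq> \<infinity>" using a2_proper unfolding proper_fun_def by auto
  define Gr where "Gr t = real_of_ereal (G (z (Suc t)))" for t
  have Gfin: "G (z (Suc t)) = ereal (Gr t)" for t
  proof -
    have "G (z (Suc t)) \<noteq> -\<infinity>" using a2_proper unfolding proper_fun_def by auto
    moreover have "G (z (Suc t)) \<noteq> \<infinity>"
    proof
      assume inf: "G (z (Suc t)) = \<infinity>"
      have "G (z (Suc t)) + ereal (1/(2*\<gamma>) * (norm (z (Suc t) - (2 *\<^sub>R y (Suc t) - \<gamma> *\<^sub>R gradH (y (Suc t)) - x t)))^2)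
          \<le> G w0 + ereal (1/(2*\<gamma>) * (norm (w0 - (2 *\<^sub>R y (Suc t) - \<gamma> *\<^sub>R gradH (y (Suc t)) - x t)))^2)"
        using z_step[of t] unfolding argmin_set_def by blast
      thus False using inf w0 by auto
    qed
    ultimately show ?thesis unfolding Gr_def by (cases "G (z (Suc t))") auto
  qed
  define \<Psi> where "\<Psi> t = F (y (Suc t)) + H (y (Suc t)) + Gr t
      + inner (?g (y (Suc t)) + ?h (y (Suc t))) (z (Suc t) - y (Suc t)) + 1/(2*\<gamma>) * (norm (z (Suc t) - y (Suc t)))^2" for t
  have dec: "\<Psi> (Suc t) \<le> \<Psi> t" for t
  proof -
    let ?y1 = "y (Suc t)" and ?y2 = "y (Suc (Suc t))" and ?z1 = "z (Suc t)" and ?z2 = "z (Suc (Suc t))"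
    have hz: "?z1 = ?y2 + \<gamma> *\<^sub>R (?g ?y2 - ?g ?y1)"
      using x_step[of t] X[of t] X[of "Suc t"] by (simp add: algebra_simps)
    have cc: "2 *\<^sub>R ?y2 - \<gamma> *\<^sub>R ?h ?y2 - x (Suc t) = ?y2 - \<gamma> *\<^sub>R (?g ?y2 + ?h ?y2)"
      using X[of "Suc t"] by (simp add: algebra_simps scaleR_2)
    have "G ?z2 + ereal (1/(2*\<gamma>) * (norm (?z2 - (2 *\<^sub>R ?y2 - \<gamma> *\<^sub>R ?h ?y2 - x (Suc t))))^2)
        \<le> G ?z1 + ereal (1/(2*\<gamma>) * (norm (?z1 - (2 *\<^sub>R ?y2 - \<gamma> *\<^sub>R ?h ?y2 - x (Suc t))))^2)"
      using z_step[of "Suc t"] unfolding argmin_set_def by blast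
    hence zopt: "Gr (Suc t) + 1/(2*\<gamma>) * (norm (?z2 - (?y2 - \<gamma> *\<^sub>R (?g ?y2 + ?h ?y2))))^2
        \<le> Gr t + 1/(2*\<gamma>) * (norm (?z1 - (?y2 - \<gamma> *\<^sub>R (?g ?y2 + ?h ?y2))))^2"
      unfolding cc Gfin by simp
    have tF: "F ?y1 \<ge> F ?y2 + inner (?g ?y2) (?y1 - ?y2) - l/2 * (norm (?y1 - ?y2))^2"
      by (rule tangent[OF a1_grad weak_cvx])
    have dH: "H ?y2 \<le> H ?y1 + inner (?h ?y1) (?y2 - ?y1) + \<beta>/2 * (norm (?y2 - ?y1))^2"
      by (rule descent[OF a3_grad a3_lip])
    have Lg: "norm (?g ?y2 - ?g ?y1) \<le> L * norm (?y2 - ?y1)"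
      using lipschitz_onD[OF a1_lip, of ?y2 ?y1] by (simp add: dist_norm)
    have Lh: "norm (?h ?y2 - ?h ?y1) \<le> \<beta> * norm (?y2 - ?y1)"
      using lipschitz_onD[OF a3_lip, of ?y2 ?y1] by (simp add: dist_norm)
    show ?thesis unfolding \<Psi>_def
      by (rule keydesc[OF gamma_pos hz zopt tF dH Lg Lh L0 b0 N])
  qed
  have Pbd: "\<Psi> t \<le> \<Psi> 0" for t
    by (induction t) (use dec order_trans in blast)+
  obtain cF where cF: "\<And>u. cF \<le> F u" using F_bdd by auto
  obtain cH where cH: "\<And>u. cH \<le> H u" using H_bdd by auto
  obtain cG where cG: "\<And>u. ereal cG \<le> G u" using G_bdd by auto
  have cGr: "cG \<le> Gr t" for t using cG[of "z (Suc t)"] unfolding Gfin by simp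
  define \<kappa> where "\<kappa> = 1/(2*\<gamma>) - (L+\<beta>)/2"
  have kpos: "\<kappa> > 0"
  proof -
    have "\<kappa> = (1 - \<gamma>*(L+\<beta>))/(2*\<gamma>)" unfolding \<kappa>_def using gamma_pos by (simp add: field_simps)
    thus ?thesis using Lb gamma_pos by simp
  qed
  have low: "F (z (Suc t)) + H (z (Suc t)) + Gr t + \<kappa> * (norm (z (Suc t) - y (Suc t)))^2 \<le> \<Psi> 0" for t
  proof -
    have f1: "F (z (Suc t)) \<le> F (y (Suc t)) + inner (?g (y (Suc t))) (z (Suc t) - y (Suc t)) + L/2 * (norm (z (Suc t) - y (Suc t)))^2"
      by (rule descent[OF a1_grad a1_lip])
    have f2: "H (z (Suc t)) \<le> H (y (Suc t)) + inner (?h (y (Suc t))) (z (Suc t) - y (Suc t)) + \<beta>/2 * (norm (z (Suc t) - y (Suc t)))^2"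
      by (rule descent[OF a3_grad a3_lip])
    have "F (z (Suc t)) + H (z (Suc t)) + Gr t + \<kappa> * (norm (z (Suc t) - y (Suc t)))^2 \<le> \<Psi> t"
      using f1 f2 unfolding \<Psi>_def \<kappa>_def by (simp add: inner_add_left inner_diff_right algebra_simps add_divide_distrib)
    thus ?thesis using Pbd[of t] by linarith
  qed
  define M where "M = \<Psi> 0 - cF - cH - cG"
  have zF: "F (z (Suc t)) \<le> \<Psi> 0 - cH - cG" for t
    using low[of t] cH[of "z (Suc t)"] cGr[of t] kpos by (smt (verit) mult_nonneg_nonneg zero_le_power2)
  have zH: "H (z (Suc t)) \<le> \<Psi> 0 - cF - cG" for t
    using low[of t] cF[of "z (Suc t)"] cGr[of t] kpos by (smt (verit) mult_nonneg_nonneg zero_le_power2)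
  have zG: "Gr t \<le> \<Psi> 0 - cF - cH" for t
    using low[of t] cF[of "z (Suc t)"] cH[of "z (Suc t)"] kpos by (smt (verit) mult_nonneg_nonneg zero_le_power2)
  have zy: "(norm (z (Suc t) - y (Suc t)))^2 \<le> M / \<kappa>" for t
  proof -
    have "\<kappa> * (norm (z (Suc t) - y (Suc t)))^2 \<le> M"
      using low[of t] cF[of "z (Suc t)"] cH[of "z (Suc t)"] cGr[of t] unfolding M_def by linarith
    thus ?thesis using kpos by (simp add: field_simps)
  qed
  obtain B where B: "\<And>t. norm (z (Suc t)) \<le> B"
  proof -
    from coercive consider (F) "filterlim F at_top at_infinity" | (G) "(G \<longlongrightarrow> \<infinity>) at_infinity"
      | (H) "filterlim H at_top at_infinity" by blast
    thus ?thesis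
    proof cases
      case F
      hence "eventually (\<lambda>u. F u > \<Psi> 0 - cH - cG) at_infinity"
        by (simp add: filterlim_at_top_dense)
      then obtain b where b: "\<And>u. norm u \<ge> b \<Longrightarrow> F u > \<Psi> 0 - cH - cG"
        unfolding eventually_at_infinity by auto
      show ?thesis
      proof (rule that)
        fix t show "norm (z (Suc t)) \<le> b" using b[of "z (Suc t)"] zF[of t] by force
      qed
    next
      case G
      hence "eventually (\<lambda>u. ereal (\<Psi> 0 - cF - cH) < G u) at_infinity"
        unfolding tendsto_PInfty by blast
      then obtain b where b: "\<And>u. norm u \<ge> b \<Longrightarrow> ereal (\<Psi> 0 - cF - cH) < G u"
        unfolding eventually_at_infinity by auto
      show ?thesis
      proof (rule that)
        fix t show "norm (z (Suc t)) \<le> b"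
          using b[of "z (Suc t)"] zG[of t] unfolding Gfin by force
      qed
    next
      case H
      hence "eventually (\<lambda>u. H u > \<Psi> 0 - cF - cG) at_infinity"
        by (simp add: filterlim_at_top_dense)
      then obtain b where b: "\<And>u. norm u \<ge> b \<Longrightarrow> H u > \<Psi> 0 - cF - cG"
        unfolding eventually_at_infinity by auto
      show ?thesis
      proof (rule that)
        fix t show "norm (z (Suc t)) \<le> b" using b[of "z (Suc t)"] zH[of t] by force
      qed
    qed
  qed
  define By where "By = B + max 1 (M / \<kappa>)"
  have yB: "norm (y (Suc t)) \<le> By" for t
  proof -
    have "norm (z (Suc t) - y (Suc t)) \<le> max 1 (M / \<kappa>)" by (rule sq_le_bound[OF norm_ge_zero zy])
    moreover have "norm (y (Suc t)) \<le> norm (z (Suc t)) + norm (z (Suc t) - y (Suc t))"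
      by (metis norm_triangle_sub add.commute norm_minus_commute)
    ultimately show ?thesis using B[of t] unfolding By_def by linarith
  qed
  have xB: "norm (x t) \<le> By + \<gamma> * (norm (?g 0) + L * By)" for t
  proof -
    have "norm (?g (y (Suc t)) - ?g 0) \<le> L * norm (y (Suc t))"
      using lipschitz_onD[OF a1_lip, of "y (Suc t)" 0] by (simp add: dist_norm)
    hence g1: "norm (?g (y (Suc t))) \<le> norm (?g 0) + L * By"
      using yB[of t] L0 norm_triangle_sub[of "?g (y (Suc t))" "?g 0"]
      by (smt (verit) mult_left_mono)
    have "norm (x t) \<le> norm (y (Suc t)) + \<gamma> * norm (?g (y (Suc t)))"
      unfolding X[of t] using norm_triangle_ineq[of "y (Suc t)" "\<gamma> *\<^sub>R ?g (y (Suc t))"] gamma_pos by simp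
    also have "\<dots> \<le> By + \<gamma> * (norm (?g 0) + L * By)"
      using yB[of t] g1 gamma_pos by (intro add_mono mult_left_mono) auto
    finally show ?thesis .
  qed
  have bx: "bounded (range x)"
    by (rule bounded_range_Suc[of x "By + \<gamma> * (norm (?g 0) + L * By)"]) (rule xB)
  show ?thesis using bx bounded_range_Suc[of y, OF yB] bounded_range_Suc[of z, OF B] by blast
qed

end
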